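(* Let $g:\mathbb{Z}_{\ge 0}\to\mathbb{R}$ be a linearly progressing opponent process with switching time $\tau_0\ge1$ (so $g(0)>0$). Let $y_{\min}\in\mathbb{R}$, let $(y^{\mathrm{nat}}_t)_{t\ge0}$ be an arbitrary real sequence, and let gains $K_+,K_-$ satisfy $K_+\le g(0)^{-1}\le K_-$. Set $u_{-1}=0$, $y_0=y^{\mathrm{nat}}_0$, and for $t\ge0$ define $$u_t=\max\bigl\{0,\ u_{t-1}-K_+(y_t-y_{\min})_+-K_-(y_t-y_{\min})_-\bigr\},\qquad y_{t+1}=\sum_{k=0}^{t}g(k)\,u_{t-k}+y^{\mathrm{nat}}_{t+1},$$ where $(x)_+=\max(x,0)$ and $(x)_-=\min(x,0)$. Then for every $t\ge0$, $$y_{t+1}\ge y_{\min}+\bigl(y^{\mathrm{nat}}_{t+1}-y^{\mathrm{nat}}_t\bigr)-\sum_{k=1}^{t}g(k)\bigl(u_{t-k-1}-u_{t-k}\bigr).$$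
   Context: An impulse response $g:\mathbb{Z}_{\ge0}\to\mathbb{R}$ is an opponent process if there is a time $\tau_0$ with $g(\tau)>0$ for $\tau<\tau_0$ and $g(\tau)\le 0$ for $\tau\ge\tau_0$. It is a linearly progressing opponent process (LPOP) if in addition there is $\alpha\in[0,1)$ with $g(t+1)\le\alpha\,g(t)$ for all $t<\tau_0-1$ and $|g(t+1)|\ge\alpha\,|g(t)|$ for all $t\ge\tau_0$. *)

theory Defs
  imports Complex_Main
begin

definition opponent_process :: "(nat \<Rightarrow> real) \<Rightarrow> nat \<Rightarrow> bool" where
  "opponent_process g \<tau>0 \<longleftrightarrow>
     (\<forall>\<tau><\<tau>0. g \<tau> > 0) \<and> (\<forall>\<tau>\<ge>\<tau>0. g \<tau> \<le> 0)"

definition lpop :: "(nat \<Rightarrow> real) \<Rightarrow> nat \<Rightarrow> bool" where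
  "lpop g \<tau>0 \<longleftrightarrow> opponent_process g \<tau>0 \<and>
     (\<exists>\<alpha>::real. 0 \<le> \<alpha> \<and> \<alpha> < 1 \<and>
        (\<forall>t. t + 1 < \<tau>0 \<longrightarrow> g (t + 1) \<le> \<alpha> * g t) \<and>
        (\<forall>t\<ge>\<tau>0. \<bar>g (t + 1)\<bar> \<ge> \<alpha> * \<bar>g t\<bar>))"

end

theory Submission
  imports Defs
begin

theorem lemma1:
  fixes g :: "nat \<Rightarrow> real" and \<tau>0 :: nat
    and ymin Kp Km :: real and ynat y :: "nat \<Rightarrow> real" and u :: "int \<Rightarrow> real"
  assumes "lpop g \<tau>0" and "\<tau>0 \<ge> 1"
    and "Kp \<le> 1 / g 0" and "1 / g 0 \<le> Km"
    and "u (-1) = 0"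
    and "y 0 = ynat 0"
    and "\<And>t::nat. u (int t) = max 0 (u (int t - 1) - Kp * max (y t - ymin) 0
                                        - Km * min (y t - ymin) 0)"
    and "\<And>t::nat. y (t + 1) = (\<Sum>k=0..t. g k * u (int t - int k)) + ynat (t + 1)"
  shows "y (t + 1) \<ge> ymin + (ynat (t + 1) - ynat t)
           - (\<Sum>k=1..t. g k * (u (int t - int k - 1) - u (int t - int k)))"
proof -
  have g0: "g 0 > 0" using assms(1,2) unfolding lpop_def opponent_process_def by auto
  have Y: "y t - ynat t = (\<Sum>k=0..t. g k * u (int t - int k - 1))"
  proof (cases t)
    case 0 then show ?thesis using assms(5,6) by simp
  next
    case (Suc s)
    have "(\<Sum>k=0..Suc s. g k * u (int (Suc s) - int k - 1))
        = (\<Sum>k=0..s. g k * u (int (Suc s) - int k - 1)) + g (Suc s) * u (-1)"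
      by simp
    also have "\<dots> = (\<Sum>k=0..s. g k * u (int s - int k))"
      using assms(5) by simp
    finally show ?thesis using assms(8)[of s] Suc by simp
  qed
  have D: "y (t+1) - ynat (t+1) - (y t - ynat t)
      = (\<Sum>k=0..t. g k * (u (int t - int k) - u (int t - int k - 1)))"
    using Y assms(8)[of t] by (simp add: sum_subtractf algebra_simps)
  also have "\<dots> = g 0 * (u (int t) - u (int t - 1))
      + (\<Sum>k=1..t. g k * (u (int t - int k) - u (int t - int k - 1)))"
    by (simp add: sum.atLeast_Suc_atMost)
  also have "(\<Sum>k=1..t. g k * (u (int t - int k) - u (int t - int k - 1)))
      = - (\<Sum>k=1..t. g k * (u (int t - int k - 1) - u (int t - int k)))"
    by (simp add: sum_negf[symmetric] algebra_simps)
  finally have D2: "y (t+1) - ynat (t+1) - (y t - ynat t)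
      = g 0 * (u (int t) - u (int t - 1))
      - (\<Sum>k=1..t. g k * (u (int t - int k - 1) - u (int t - int k)))" by simp
  have key: "y t + g 0 * (u (int t) - u (int t - 1)) \<ge> ymin"
  proof (cases "y t - ymin \<ge> 0")
    case True
    have h: "u (int t) \<ge> u (int t - 1) - Kp * (y t - ymin)"
      using assms(7)[of t] True by simp
    have "g 0 * (u (int t) - u (int t - 1)) \<ge> - (g 0 * Kp) * (y t - ymin)"
    proof -
      have h2: "- Kp * (y t - ymin) \<le> u (int t) - u (int t - 1)" using h by linarith
      have "g 0 * (- Kp * (y t - ymin)) \<le> g 0 * (u (int t) - u (int t - 1))"
        using mult_left_mono[OF h2, of "g 0"] g0 by linarith
      thus ?thesis by simp
    qed
    moreover have "g 0 * Kp \<le> 1" using assms(3) g0 by (simp add: field_simps)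
    moreover have "(g 0 * Kp) * (y t - ymin) \<le> 1 * (y t - ymin)"
      using mult_right_mono[OF \<open>g 0 * Kp \<le> 1\<close> True] .
    ultimately show ?thesis by simp
  next
    case False
    have h: "u (int t) \<ge> u (int t - 1) - Km * (y t - ymin)"
      using assms(7)[of t] False by simp
    have "g 0 * (u (int t) - u (int t - 1)) \<ge> - (g 0 * Km) * (y t - ymin)"
    proof -
      have h2: "- Km * (y t - ymin) \<le> u (int t) - u (int t - 1)" using h by linarith
      have "g 0 * (- Km * (y t - ymin)) \<le> g 0 * (u (int t) - u (int t - 1))"
        using mult_left_mono[OF h2, of "g 0"] g0 by linarith
      thus ?thesis by simp
    qed
    moreover have "g 0 * Km \<ge> 1" using assms(4) g0 by (simp add: field_simps)
    moreover have "(g 0 * Km) * (y t - ymin) \<le> 1 * (y t - ymin)"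
      using mult_right_mono_neg[OF \<open>g 0 * Km \<ge> 1\<close>] False by simp
    ultimately show ?thesis by simp
  qed
  show ?thesis using D2 key by simp
qed

end
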